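(* Let $\alpha\ge1$ and $N\ge2$. Let $A,B$ be increasing Borel subsets of $\Omega_N$ with $\pi_{N,\alpha}(A),\pi_{N,\alpha}(B)>0$ such that $x\in A$ and $x'\in B$ imply $x\wedge x'\in B$. Then $\pi_{N,\alpha}(\cdot\mid A)$ stochastically dominates $\pi_{N,\alpha}(\cdot\mid B)$, i.e. $\pi_{N,\alpha}(f\mid A)\ge\pi_{N,\alpha}(f\mid B)$ for every increasing function $f$.
   Context: $\Omega_N=\{x\in\mathbb{R}^{N-1}:0\le x_1\le\dots\le x_{N-1}\le N\}$, $x_0=0,x_N=N$; $\pi_{N,\alpha}(dx)=\frac{\Gamma(N\alpha)}{\Gamma(\alpha)^NN^{N\alpha-1}}\prod_{i=1}^N(x_i-x_{i-1})^{\alpha-1}dx$. Increasing means w.r.t. coordinatewise order; a set is increasing if its indicator is. $(x\wedge x')_i=\min(x_i,x'_i)$. *)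

theory Defs
  imports "HOL-Analysis.Analysis"
begin

text \<open>Points of \<Omega>_N are represented as extensional functions x :: nat \<Rightarrow> real
  with domain {1..<N} (coordinates x_1,...,x_{N-1}); Lebesgue measure on R^{N-1}
  is the product measure of lborel over {1..<N}.\<close>

definition leb_N :: "nat \<Rightarrow> (nat \<Rightarrow> real) measure" where
  "leb_N N = PiM {1..<N} (\<lambda>_. lborel)"

definition xext :: "nat \<Rightarrow> (nat \<Rightarrow> real) \<Rightarrow> nat \<Rightarrow> real" where
  "xext N x i = (if i = 0 then 0 else if i = N then real N else x i)"

definition Omega :: "nat \<Rightarrow> (nat \<Rightarrow> real) set" where
  "Omega N = {x \<in> PiE {1..<N} (\<lambda>_. UNIV).
      \<forall>i\<in>{1..N}. xext N x (i - 1) \<le> xext N x i}"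

definition norm_const :: "nat \<Rightarrow> real \<Rightarrow> real" where
  "norm_const N \<alpha> = Gamma (real N * \<alpha>) / (Gamma \<alpha> ^ N * real N powr (real N * \<alpha> - 1))"

definition pi_density :: "nat \<Rightarrow> real \<Rightarrow> (nat \<Rightarrow> real) \<Rightarrow> real" where
  "pi_density N \<alpha> x = indicator (Omega N) x * norm_const N \<alpha> *
      (\<Prod>i\<in>{1..N}. (xext N x i - xext N x (i - 1)) powr (\<alpha> - 1))"

definition pi_measure :: "nat \<Rightarrow> real \<Rightarrow> (nat \<Rightarrow> real) measure" where
  "pi_measure N \<alpha> = density (leb_N N) (\<lambda>x. ennreal (pi_density N \<alpha> x))"

definition coord_le :: "nat \<Rightarrow> (nat \<Rightarrow> real) \<Rightarrow> (nat \<Rightarrow> real) \<Rightarrow> bool" where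
  "coord_le N x y \<longleftrightarrow> (\<forall>i\<in>{1..<N}. x i \<le> y i)"

definition increasing_fun :: "nat \<Rightarrow> ((nat \<Rightarrow> real) \<Rightarrow> real) \<Rightarrow> bool" where
  "increasing_fun N f \<longleftrightarrow>
     (\<forall>x\<in>Omega N. \<forall>y\<in>Omega N. coord_le N x y \<longrightarrow> f x \<le> f y)"

definition increasing_set :: "nat \<Rightarrow> (nat \<Rightarrow> real) set \<Rightarrow> bool" where
  "increasing_set N A \<longleftrightarrow> A \<subseteq> Omega N \<and> increasing_fun N (indicator A)"

definition meet :: "(nat \<Rightarrow> real) \<Rightarrow> (nat \<Rightarrow> real) \<Rightarrow> nat \<Rightarrow> real" where
  "meet x y = (\<lambda>i. min (x i) (y i))"

definition cond_exp_set :: "(nat \<Rightarrow> real) measure \<Rightarrow> ((nat \<Rightarrow> real) \<Rightarrow> real) \<Rightarrow> (nat \<Rightarrow> real) set \<Rightarrow> real" where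
  "cond_exp_set M f A = (\<integral>x. indicator A x * f x \<partial>M) / measure M A"

end

theory Submission
  imports Defs
begin

lemma ennreal_pair_ineq:
  fixes a b c d :: ennreal
  assumes "a \<le> c" "b \<le> c" "a * b \<le> c * d"
  shows "a + b \<le> c + d"
proof (cases "c = \<infinity> \<or> d = \<infinity>")
  case True then show ?thesis by auto
next
  case False
  then have cf: "c < \<infinity>" "d < \<infinity>" by (auto simp: top.not_eq_extremum)
  then have af: "a < \<infinity>" "b < \<infinity>" using assms(1,2) by (auto simp: le_less_trans)
  obtain a' where ra: "a = ennreal a'" "a' \<ge> 0" using af(1) less_top_ennreal by auto
  obtain b' where rb: "b = ennreal b'" "b' \<ge> 0" using af(2) less_top_ennreal by auto
  obtain c' where rc: "c = ennreal c'" "c' \<ge> 0" using cf(1) less_top_ennreal by auto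
  obtain d' where rd: "d = ennreal d'" "d' \<ge> 0" using cf(2) less_top_ennreal by auto
  have h1: "a' \<le> c'" using assms(1) ra rc by (simp add: ennreal_le_iff)
  have h2: "b' \<le> c'" using assms(2) rb rc by (simp add: ennreal_le_iff)
  have "ennreal (a' * b') \<le> ennreal (c' * d')"
    using assms(3) ra rb rc rd by (simp add: ennreal_mult)
  then have h3: "a' * b' \<le> c' * d'" using rc rd by (simp add: ennreal_le_iff)
  have "a' + b' \<le> c' + d'"
  proof (cases "c' = 0")
    case True then show ?thesis using h1 h2 ra rb rd by simp
  next
    case False
    then have cp: "c' > 0" using rc by simp
    have "0 \<le> (c' - a') * (c' - b')" using h1 h2 by simp
    also have "\<dots> = c' * c' - c' * (a' + b') + a' * b'" by (simp add: algebra_simps)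
    finally have "c' * (a' + b') \<le> c' * c' + a' * b'" by simp
    also have "\<dots> \<le> c' * c' + c' * d'" using h3 by simp
    finally have "c' * (a' + b') \<le> c' * (c' + d')" by (simp add: algebra_simps)
    then show ?thesis using cp by simp
  qed
  then have "ennreal (a' + b') \<le> ennreal (c' + d')" by (rule ennreal_leI)
  then show ?thesis unfolding ra rb rc rd ennreal_plus[OF ra(2) rb(2)] ennreal_plus[OF rc(2) rd(2)] .
qed

lemma prod_split:
  fixes g h :: "real \<Rightarrow> ennreal"
  assumes [measurable]: "g \<in> borel_measurable borel" "h \<in> borel_measurable borel"
  shows "(\<integral>\<^sup>+s. g s \<partial>lborel) * (\<integral>\<^sup>+t. h t \<partial>lborel) =
    (\<integral>\<^sup>+s. \<integral>\<^sup>+t. (if s < t then g s * h t + g t * h s else 0) \<partial>lborel \<partial>lborel)"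
proof -
  have swap: "(\<integral>\<^sup>+s. \<integral>\<^sup>+t. (if t < s then g s * h t else 0) \<partial>lborel \<partial>lborel) = (\<integral>\<^sup>+s. \<integral>\<^sup>+t. (if s < t then g t * h s else 0) \<partial>lborel \<partial>lborel)"
    by (rule lborel_pair.Fubini'[symmetric]) measurable
  have "(\<integral>\<^sup>+s. g s \<partial>lborel) * (\<integral>\<^sup>+t. h t \<partial>lborel) = (\<integral>\<^sup>+s. \<integral>\<^sup>+t. g s * h t \<partial>lborel \<partial>lborel)"
    by (simp add: nn_integral_multc nn_integral_cmult)
  also have "\<dots> = (\<integral>\<^sup>+s. (\<integral>\<^sup>+t. (if s < t then g s * h t else 0) \<partial>lborel)
                     + (\<integral>\<^sup>+t. (if t < s then g s * h t else 0) \<partial>lborel) \<partial>lborel)"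
  proof (rule nn_integral_cong)
    fix s :: real
    have "(\<integral>\<^sup>+t. g s * h t \<partial>lborel) = (\<integral>\<^sup>+t. (if s < t then g s * h t else 0) + (if t < s then g s * h t else 0) \<partial>lborel)"
      by (rule nn_integral_cong_AE) (use AE_lborel_singleton[of s] in \<open>auto elim!: eventually_mono\<close>)
    also have "\<dots> = (\<integral>\<^sup>+t. (if s < t then g s * h t else 0) \<partial>lborel) + (\<integral>\<^sup>+t. (if t < s then g s * h t else 0) \<partial>lborel)"
      by (rule nn_integral_add) auto
    finally show "(\<integral>\<^sup>+t. g s * h t \<partial>lborel) = \<dots>" .
  qed
  also have "\<dots> = (\<integral>\<^sup>+s. \<integral>\<^sup>+t. (if s < t then g s * h t else 0) \<partial>lborel \<partial>lborel)
       + (\<integral>\<^sup>+s. \<integral>\<^sup>+t. (if t < s then g s * h t else 0) \<partial>lborel \<partial>lborel)"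
    by (rule nn_integral_add) auto
  also have "\<dots> = (\<integral>\<^sup>+s. \<integral>\<^sup>+t. (if s < t then g s * h t else 0) \<partial>lborel \<partial>lborel)
       + (\<integral>\<^sup>+s. \<integral>\<^sup>+t. (if s < t then g t * h s else 0) \<partial>lborel \<partial>lborel)" by (simp only: swap)
  also have "(\<integral>\<^sup>+s. \<integral>\<^sup>+t. (if s < t then g s * h t else 0) \<partial>lborel \<partial>lborel)
       + (\<integral>\<^sup>+s. \<integral>\<^sup>+t. (if s < t then g t * h s else 0) \<partial>lborel \<partial>lborel)
       = (\<integral>\<^sup>+s. (\<integral>\<^sup>+t. (if s < t then g s * h t else 0) \<partial>lborel) + (\<integral>\<^sup>+t. (if s < t then g t * h s else 0) \<partial>lborel) \<partial>lborel)"
    by (rule nn_integral_add[symmetric]) auto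
  also have "\<dots> = (\<integral>\<^sup>+s. \<integral>\<^sup>+t. (if s < t then g s * h t + g t * h s else 0) \<partial>lborel \<partial>lborel)"
    by (rule nn_integral_cong, subst nn_integral_add[symmetric]) (auto intro!: nn_integral_cong)
  finally show ?thesis .
qed

lemma four_fun_1d:
  fixes g1 g2 g3 g4 :: "real \<Rightarrow> ennreal"
  assumes [measurable]: "g1 \<in> borel_measurable borel" "g2 \<in> borel_measurable borel"
    "g3 \<in> borel_measurable borel" "g4 \<in> borel_measurable borel"
  assumes H: "\<And>s t. g1 s * g2 t \<le> g3 (max s t) * g4 (min s t)"
  shows "(\<integral>\<^sup>+s. g1 s \<partial>lborel) * (\<integral>\<^sup>+t. g2 t \<partial>lborel) \<le> (\<integral>\<^sup>+s. g3 s \<partial>lborel) * (\<integral>\<^sup>+t. g4 t \<partial>lborel)"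
proof -
  have "(\<integral>\<^sup>+s. g1 s \<partial>lborel) * (\<integral>\<^sup>+t. g2 t \<partial>lborel) = 
    (\<integral>\<^sup>+s. \<integral>\<^sup>+t. (if s < t then g1 s * g2 t + g1 t * g2 s else 0) \<partial>lborel \<partial>lborel)"
    by (rule prod_split) auto
  also have "\<dots> \<le> (\<integral>\<^sup>+s. \<integral>\<^sup>+t. (if s < t then g4 s * g3 t + g4 t * g3 s else 0) \<partial>lborel \<partial>lborel)"
  proof (intro nn_integral_mono)
    fix s t :: real
    show "(if s < t then g1 s * g2 t + g1 t * g2 s else 0) \<le> (if s < t then g4 s * g3 t + g4 t * g3 s else 0)"
    proof (cases "s < t")
      case True
      have a: "g1 s * g2 t \<le> g3 t * g4 s" using H[of s t] True by simp
      have b: "g1 t * g2 s \<le> g3 t * g4 s" using H[of t s] True by simp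
      have "(g1 s * g2 t) * (g1 t * g2 s) = (g1 s * g2 s) * (g1 t * g2 t)" by (simp add: ac_simps)
      also have "\<dots> \<le> (g3 s * g4 s) * (g3 t * g4 t)" by (rule mult_mono) (use H[of s s] H[of t t] in simp_all)
      also have "\<dots> = (g3 t * g4 s) * (g3 s * g4 t)" by (simp add: ac_simps)
      finally have "g1 s * g2 t + g1 t * g2 s \<le> g3 t * g4 s + g3 s * g4 t"
        using a b by (intro ennreal_pair_ineq)
      then show ?thesis using True by (simp add: ac_simps)
    qed simp
  qed
  also have "\<dots> = (\<integral>\<^sup>+s. g4 s \<partial>lborel) * (\<integral>\<^sup>+t. g3 t \<partial>lborel)"
    by (rule prod_split[symmetric]) auto
  finally show ?thesis by (simp add: ac_simps)
qed

lemma sup_upd: "sup (u(i:=s)) (v(i:=t)) = (sup u v)(i := max s t)" for u v :: "'i \<Rightarrow> real"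
  by (auto simp: fun_eq_iff sup_max)
lemma inf_upd: "inf (u(i:=s)) (v(i:=t)) = (inf u v)(i := min s t)" for u v :: "'i \<Rightarrow> real"
  by (auto simp: fun_eq_iff inf_min)

lemma four_fun:
  fixes f1 f2 f3 f4 :: "('i \<Rightarrow> real) \<Rightarrow> ennreal"
  assumes "finite I"
  and "f1 \<in> borel_measurable (PiM I (\<lambda>_. lborel))" "f2 \<in> borel_measurable (PiM I (\<lambda>_. lborel))"
  and "f3 \<in> borel_measurable (PiM I (\<lambda>_. lborel))" "f4 \<in> borel_measurable (PiM I (\<lambda>_. lborel))"
  and "\<And>x y. x \<in> PiE I (\<lambda>_. UNIV) \<Longrightarrow> y \<in> PiE I (\<lambda>_. UNIV) \<Longrightarrow> f1 x * f2 y \<le> f3 (sup x y) * f4 (inf x y)"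
  shows "integral\<^sup>N (PiM I (\<lambda>_. lborel)) f1 * integral\<^sup>N (PiM I (\<lambda>_. lborel)) f2
     \<le> integral\<^sup>N (PiM I (\<lambda>_. lborel)) f3 * integral\<^sup>N (PiM I (\<lambda>_. lborel)) f4"
  using assms
proof (induction I arbitrary: f1 f2 f3 f4 rule: finite_induct)
  case empty
  have "f1 (\<lambda>_. undefined) * f2 (\<lambda>_. undefined) \<le> f3 (\<lambda>_. undefined) * f4 (\<lambda>_. undefined)"
    using empty.prems(5)[of "\<lambda>_. undefined" "\<lambda>_. undefined"] by simp
  then show ?case by (simp add: PiM_empty nn_integral_count_space_finite)
next
  case (insert i I)
  interpret product_sigma_finite "\<lambda>_::'i. lborel :: real measure"
    by (simp add: product_sigma_finite_def lborel.sigma_finite_measure_axioms)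
  let ?M = "PiM I (\<lambda>_. lborel :: real measure)"
  define F1 where "F1 u = (\<integral>\<^sup>+t. f1 (u(i:=t)) \<partial>lborel)" for u
  define F2 where "F2 u = (\<integral>\<^sup>+t. f2 (u(i:=t)) \<partial>lborel)" for u
  define F3 where "F3 u = (\<integral>\<^sup>+t. f3 (u(i:=t)) \<partial>lborel)" for u
  define F4 where "F4 u = (\<integral>\<^sup>+t. f4 (u(i:=t)) \<partial>lborel)" for u
  note [measurable] = insert.prems(1-4)
  have eq: "integral\<^sup>N (PiM (insert i I) (\<lambda>_. lborel)) f = integral\<^sup>N ?M (\<lambda>u. \<integral>\<^sup>+t. f (u(i:=t)) \<partial>lborel)"
    if "f \<in> borel_measurable (PiM (insert i I) (\<lambda>_. lborel))" for f
    using product_nn_integral_insert[OF insert.hyps(1,2) that] by simp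
  have mF: "(\<lambda>u. \<integral>\<^sup>+t. f (u(i:=t)) \<partial>lborel) \<in> borel_measurable ?M"
    if [measurable]: "f \<in> borel_measurable (PiM (insert i I) (\<lambda>_. lborel))" for f
    by measurable
  have mg: "(\<lambda>t. f (u(i:=t))) \<in> borel_measurable borel"
    if "f \<in> borel_measurable (PiM (insert i I) (\<lambda>_. lborel))" "u \<in> space ?M" for f u
    using measurable_comp[OF measurable_component_update that(1), OF that(2) insert.hyps(2)]
    by (simp add: comp_def fun_upd_def)
  have "integral\<^sup>N ?M F1 * integral\<^sup>N ?M F2 \<le> integral\<^sup>N ?M F3 * integral\<^sup>N ?M F4"
  proof (rule insert.IH)
    show "F1 \<in> borel_measurable ?M" "F2 \<in> borel_measurable ?M" "F3 \<in> borel_measurable ?M" "F4 \<in> borel_measurable ?M"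
      unfolding F1_def F2_def F3_def F4_def by (auto intro: mF)
  next
    fix u v :: "'i \<Rightarrow> real" assume u: "u \<in> PiE I (\<lambda>_. UNIV)" and v: "v \<in> PiE I (\<lambda>_. UNIV)"
    have su: "sup u v \<in> space ?M" "inf u v \<in> space ?M" "u \<in> space ?M" "v \<in> space ?M"
      using u v by (auto simp: space_PiM PiE_def extensional_def)
    show "F1 u * F2 v \<le> F3 (sup u v) * F4 (inf u v)"
      unfolding F1_def F2_def F3_def F4_def
    proof (rule four_fun_1d)
      show "(\<lambda>t. f1 (u(i:=t))) \<in> borel_measurable borel" by (rule mg[OF insert.prems(1) su(3)])
      show "(\<lambda>t. f2 (v(i:=t))) \<in> borel_measurable borel" by (rule mg[OF insert.prems(2) su(4)])
      show "(\<lambda>t. f3 ((sup u v)(i:=t))) \<in> borel_measurable borel" by (rule mg[OF insert.prems(3) su(1)])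
      show "(\<lambda>t. f4 ((inf u v)(i:=t))) \<in> borel_measurable borel" by (rule mg[OF insert.prems(4) su(2)])
    next
      fix s t
      have "u(i:=s) \<in> PiE (insert i I) (\<lambda>_. UNIV)" "v(i:=t) \<in> PiE (insert i I) (\<lambda>_. UNIV)"
        using u v by (auto simp: PiE_def extensional_def)
      from insert.prems(5)[OF this] show "f1 (u(i:=s)) * f2 (v(i:=t)) \<le> f3 ((sup u v)(i:=max s t)) * f4 ((inf u v)(i:=min s t))"
        by (simp only: sup_upd inf_upd)
    qed
  qed
  then show ?case unfolding F1_def F2_def F3_def F4_def
    by (simp add: eq insert.prems(1-4))
qed

lemma space_leb: "space (leb_N N) = PiE {1..<N} (\<lambda>_. UNIV)"
  by (simp add: leb_N_def space_PiM)

lemma xext_meas[measurable]: "(\<lambda>x. xext N x i) \<in> borel_measurable (leb_N N)"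
proof (cases "i \<in> {1..<N}")
  case True
  then have "(\<lambda>x. xext N x i) = (\<lambda>x. x i)" by (auto simp: xext_def fun_eq_iff)
  moreover have "(\<lambda>x. x i) \<in> borel_measurable (leb_N N)"
    unfolding leb_N_def using True by measurable
  ultimately show ?thesis by simp
next
  case False
  then have "(\<lambda>x. xext N x i) \<in> borel_measurable (leb_N N) \<longleftrightarrow>
     (\<lambda>x. if i = 0 then 0 else if i = N then real N else undefined) \<in> borel_measurable (leb_N N)"
    by (intro measurable_cong) (auto simp: space_leb xext_def PiE_def extensional_def)
  then show ?thesis by simp
qed

lemma Omega_eq: "Omega N = {x \<in> space (leb_N N). \<forall>i\<in>{1..N}. xext N x (i - 1) \<le> xext N x i}"
  by (simp add: Omega_def space_leb)

lemma Omega_sets[measurable]: "Omega N \<in> sets (leb_N N)"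
proof -
  have "Measurable.pred (leb_N N) (\<lambda>x. xext N x (i - 1) \<le> xext N x i)" for i
    unfolding pred_def by (rule borel_measurable_le[OF xext_meas xext_meas])
  then have "Measurable.pred (leb_N N) (\<lambda>x. \<forall>i\<in>{1..N}. xext N x (i - 1) \<le> xext N x i)"
    by (intro pred_intros_finite) auto
  then show ?thesis unfolding Omega_eq pred_def .
qed

lemma p_meas[measurable]: "pi_density N \<alpha> \<in> borel_measurable (leb_N N)"
  unfolding pi_density_def by measurable

lemma Omega_chain:
  assumes "x \<in> Omega N" "j \<le> k" "k \<le> N"
  shows "xext N x j \<le> xext N x k"
  using assms(2,3)
proof (induction k)
  case 0 then show ?case by simp
next
  case (Suc k)
  show ?case
  proof (cases "j = Suc k")
    case True then show ?thesis by simp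
  next
    case False
    then have "xext N x j \<le> xext N x k" using Suc by simp
    also have "xext N x k \<le> xext N x (Suc k)"
      using assms(1) Suc.prems unfolding Omega_def by (auto dest!: bspec[of _ _ "Suc k"])
    finally show ?thesis .
  qed
qed

lemma Omega_bounds:
  assumes "x \<in> Omega N" "i \<in> {1..<N}"
  shows "0 \<le> x i" "x i \<le> real N"
proof -
  have "xext N x 0 \<le> xext N x i" "xext N x i \<le> xext N x N"
    using Omega_chain[OF assms(1)] assms(2) by auto
  then show "0 \<le> x i" "x i \<le> real N" using assms(2) by (auto simp: xext_def)
qed

lemma xext_sup: "xext N (sup x y) i = max (xext N x i) (xext N y i)"
  by (simp add: xext_def sup_max)
lemma xext_inf: "xext N (inf x y) i = min (xext N x i) (xext N y i)"
  by (simp add: xext_def inf_min)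

lemma Omega_sup: "x \<in> Omega N \<Longrightarrow> y \<in> Omega N \<Longrightarrow> sup x y \<in> Omega N"
  unfolding Omega_def by (auto simp: xext_sup PiE_def extensional_def intro: max.mono)
lemma Omega_inf: "x \<in> Omega N \<Longrightarrow> y \<in> Omega N \<Longrightarrow> inf x y \<in> Omega N"
  unfolding Omega_def by (auto simp: xext_inf PiE_def extensional_def intro: min.mono)

lemma poly_ineq:
  fixes a b d e :: real
  assumes "a \<le> b" "e \<le> d"
  shows "(b - a) * (d - e) \<le> (max b d - max a e) * (min b d - min a e)"
proof (cases "b \<le> d")
  case bd: True
  show ?thesis
  proof (cases "a \<le> e")
    case True then show ?thesis using bd by (simp add: mult.commute)
  next
    case False
    have e1: "(d - a) * (b - e) - (b - a) * (d - e) = (d - b) * (a - e)" by (simp add: algebra_simps)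
    have e2: "(d - b) * (a - e) \<ge> 0" using bd False by simp
    have e3: "(max b d - max a e) * (min b d - min a e) = (d - a) * (b - e)"
      using bd False by (simp add: max_def min_def)
    have "(d - a) * (b - e) - (b - a) * (d - e) \<ge> 0" using e1 e2 by simp
    then show ?thesis unfolding e3 by simp
  qed
next
  case bd: False
  show ?thesis
  proof (cases "a \<le> e")
    case True
    have e1: "(b - e) * (d - a) - (b - a) * (d - e) = (b - d) * (e - a)" by (simp add: algebra_simps)
    have e2: "(b - d) * (e - a) \<ge> 0" using bd True by simp
    have e3: "(max b d - max a e) * (min b d - min a e) = (b - e) * (d - a)"
      using bd True by (simp add: max_def min_def)
    have "(b - e) * (d - a) - (b - a) * (d - e) \<ge> 0" using e1 e2 by simp
    then show ?thesis unfolding e3 by simp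
  next
    case False then show ?thesis using bd by simp
  qed
qed

lemma powr_ineq:
  fixes a b d e c :: real
  assumes "a \<le> b" "e \<le> d" "0 \<le> c"
  shows "(b - a) powr c * (d - e) powr c \<le> (max b d - max a e) powr c * (min b d - min a e) powr c"
proof -
  have "(b - a) powr c * (d - e) powr c = ((b - a) * (d - e)) powr c"
    using assms by (simp add: powr_mult)
  also have "\<dots> \<le> ((max b d - max a e) * (min b d - min a e)) powr c"
    using assms poly_ineq[OF assms(1,2)] by (intro powr_mono2) auto
  also have "\<dots> = (max b d - max a e) powr c * (min b d - min a e) powr c"
    using assms by (simp add: powr_mult)
  finally show ?thesis .
qed

lemma norm_const_nonneg: "\<alpha> > 0 \<Longrightarrow> N > 0 \<Longrightarrow> norm_const N \<alpha> \<ge> 0"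
  unfolding norm_const_def by (intro divide_nonneg_nonneg mult_nonneg_nonneg) auto

lemma p_nonneg: "\<alpha> > 0 \<Longrightarrow> N > 0 \<Longrightarrow> pi_density N \<alpha> x \<ge> 0"
  unfolding pi_density_def using norm_const_nonneg[of \<alpha> N]
  by (intro mult_nonneg_nonneg prod_nonneg) auto

lemma p_mtp2:
  assumes "\<alpha> \<ge> 1" "N > 0" "x \<in> Omega N" "y \<in> Omega N"
  shows "pi_density N \<alpha> x * pi_density N \<alpha> y \<le> pi_density N \<alpha> (sup x y) * pi_density N \<alpha> (inf x y)"
proof -
  define C where "C = norm_const N \<alpha>"
  define F where "F z i = (xext N z i - xext N z (i - 1)) powr (\<alpha> - 1)" for z i
  have C: "C \<ge> 0" unfolding C_def using assms by (intro norm_const_nonneg) auto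
  have pe: "pi_density N \<alpha> z = C * (\<Prod>i\<in>{1..N}. F z i)" if "z \<in> Omega N" for z
    using that by (simp add: pi_density_def C_def F_def)
  have "(\<Prod>i\<in>{1..N}. F x i) * (\<Prod>i\<in>{1..N}. F y i) = (\<Prod>i\<in>{1..N}. F x i * F y i)"
    by (simp add: prod.distrib)
  also have "\<dots> \<le> (\<Prod>i\<in>{1..N}. F (sup x y) i * F (inf x y) i)"
  proof (rule prod_mono)
    fix i assume i: "i \<in> {1..N}"
    have "xext N x (i - 1) \<le> xext N x i" "xext N y (i - 1) \<le> xext N y i"
      using assms(3,4) i unfolding Omega_def by auto
    then show "0 \<le> F x i * F y i \<and> F x i * F y i \<le> F (sup x y) i * F (inf x y) i"
      unfolding F_def xext_sup xext_inf using assms(1) by (auto intro!: powr_ineq)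
  qed
  also have "\<dots> = (\<Prod>i\<in>{1..N}. F (sup x y) i) * (\<Prod>i\<in>{1..N}. F (inf x y) i)"
    by (simp add: prod.distrib)
  finally have *: "(\<Prod>i\<in>{1..N}. F x i) * (\<Prod>i\<in>{1..N}. F y i) \<le> \<dots>" .
  have "pi_density N \<alpha> x * pi_density N \<alpha> y = (C * C) * ((\<Prod>i\<in>{1..N}. F x i) * (\<Prod>i\<in>{1..N}. F y i))"
    using assms by (simp add: pe ac_simps)
  also have "\<dots> \<le> (C * C) * ((\<Prod>i\<in>{1..N}. F (sup x y) i) * (\<Prod>i\<in>{1..N}. F (inf x y) i))"
    using * C by (intro mult_left_mono) auto
  also have "\<dots> = pi_density N \<alpha> (sup x y) * pi_density N \<alpha> (inf x y)"
    using assms Omega_sup Omega_inf by (simp add: pe ac_simps)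
  finally show ?thesis .
qed

theorem lemma2p4:
  fixes N :: nat and \<alpha> :: real
    and A B :: "(nat \<Rightarrow> real) set"
  assumes "\<alpha> \<ge> 1" and "N \<ge> 2"
    and "A \<in> sets (leb_N N)" and "B \<in> sets (leb_N N)"
    and "increasing_set N A" and "increasing_set N B"
    and "measure (pi_measure N \<alpha>) A > 0" and "measure (pi_measure N \<alpha>) B > 0"
    and "\<And>x y. x \<in> A \<Longrightarrow> y \<in> B \<Longrightarrow> meet x y \<in> B"
  shows "\<forall>f. f \<in> borel_measurable (leb_N N) \<and> increasing_fun N f \<longrightarrow>
           cond_exp_set (pi_measure N \<alpha>) f A \<ge> cond_exp_set (pi_measure N \<alpha>) f B"
proof (intro allI impI, elim conjE)
  fix f :: "(nat \<Rightarrow> real) \<Rightarrow> real"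
  assume fm[measurable]: "f \<in> borel_measurable (leb_N N)" and finc: "increasing_fun N f"
  note [measurable] = assms(3,4)
  define L where "L = leb_N N"
  define p where "p = pi_density N \<alpha>"
  define M where "M = pi_measure N \<alpha>"
  have M_eq: "M = density L (\<lambda>x. ennreal (p x))" unfolding M_def L_def p_def pi_measure_def ..
  have sM: "sets M = sets L" and spM: "space M = space L" unfolding M_eq by simp_all
  have pm[measurable]: "p \<in> borel_measurable L" unfolding p_def L_def by measurable
  have pnn: "p x \<ge> 0" for x unfolding p_def using assms(1,2) by (intro p_nonneg) auto
  have AO: "A \<subseteq> Omega N" and BO: "B \<subseteq> Omega N"
    using assms(5,6) unfolding increasing_set_def by auto
  have AL[measurable]: "A \<in> sets L" and BL[measurable]: "B \<in> sets L" using assms(3,4) unfolding L_def by auto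
  have fL[measurable]: "f \<in> borel_measurable L" using fm unfolding L_def by auto
  have measM: "(borel_measurable M :: (_ \<Rightarrow> real) set) = borel_measurable L"
    by (rule measurable_cong_sets[OF sM refl])
  define z :: "nat \<Rightarrow> real" where "z = (\<lambda>i. if i \<in> {1..<N} then 0 else undefined)"
  define t :: "nat \<Rightarrow> real" where "t = (\<lambda>i. if i \<in> {1..<N} then real N else undefined)"
  have zO: "z \<in> Omega N"
    unfolding Omega_def z_def by (auto simp: xext_def PiE_def extensional_def)
  have tO: "t \<in> Omega N"
    unfolding Omega_def t_def by (auto simp: xext_def PiE_def extensional_def)
  have fzx: "f z \<le> f x" and fxt: "f x \<le> f t" if "x \<in> Omega N" for x
  proof -
    show "f z \<le> f x" using finc zO that Omega_bounds[OF that]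
      unfolding increasing_fun_def coord_le_def z_def by auto
    show "f x \<le> f t" using finc tO that Omega_bounds[OF that]
      unfolding increasing_fun_def coord_le_def t_def by auto
  qed
  define g where "g x = f x - f z" for x
  define C where "C = f t - f z"
  have gm[measurable]: "g \<in> borel_measurable L" unfolding g_def by measurable
  have g_bd: "0 \<le> g x" "g x \<le> C" if "x \<in> Omega N" for x
    using fzx[OF that] fxt[OF that] unfolding g_def C_def by auto
  have C0: "C \<ge> 0" using g_bd[OF zO] by simp

  have key: "cond_exp_set M f X = enn2real (\<integral>\<^sup>+x. ennreal (indicator X x * g x) \<partial>M) / measure M X + f z"
    and fin: "emeasure M X = ennreal (measure M X)"
    and finE: "(\<integral>\<^sup>+x. ennreal (indicator X x * g x) \<partial>M) < top"
    if X: "X \<in> sets L" "X \<subseteq> Omega N" "measure M X > 0" for X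
  proof -
    have XM: "X \<in> sets M" using X sM by simp
    have ninf: "emeasure M X \<noteq> top"
    proof
      assume "emeasure M X = top"
      then have "measure M X = 0" by (simp add: measure_def)
      then show False using X by simp
    qed
    show fin': "emeasure M X = ennreal (measure M X)" using ninf by (rule emeasure_eq_ennreal_measure)
    have "(\<integral>\<^sup>+x. ennreal (indicator X x * g x) \<partial>M) \<le> (\<integral>\<^sup>+x. ennreal C * indicator X x \<partial>M)"
      using g_bd X(2) by (intro nn_integral_mono) (auto simp: indicator_def intro!: ennreal_leI)
    also have "\<dots> = ennreal C * emeasure M X" using XM by (rule nn_integral_cmult_indicator)
    also have "\<dots> < top" using fin' by (simp add: ennreal_mult_less_top)
    finally show finE': "(\<integral>\<^sup>+x. ennreal (indicator X x * g x) \<partial>M) < top" .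
    have gM: "g \<in> borel_measurable M" using gm measM by simp
    have "AE x in M. x \<in> X \<longrightarrow> norm (g x) \<le> C"
      using g_bd X(2) by (intro AE_I2) auto
    then have i1: "integrable M (\<lambda>x. indicator X x * g x)"
      using integrableI_bounded_set_indicator[OF XM gM, of C] ninf
      by (auto simp: top.not_eq_extremum)
    have i2: "integrable M (\<lambda>x. f z * indicator X x)"
      using XM ninf by (auto simp: integrable_indicator_iff top.not_eq_extremum)
    have "(\<integral>x. indicator X x * f x \<partial>M) = (\<integral>x. indicator X x * g x + f z * indicator X x \<partial>M)"
      by (rule Bochner_Integration.integral_cong) (auto simp: g_def indicator_def)
    also have "\<dots> = (\<integral>x. indicator X x * g x \<partial>M) + (\<integral>x. f z * indicator X x \<partial>M)"
      using i1 i2 by (rule Bochner_Integration.integral_add)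
    also have "(\<integral>x. f z * indicator X x \<partial>M) = f z * measure M X"
      using XM by (simp add: Int_absorb2 sets.sets_into_space)
    also have "(\<integral>x. indicator X x * g x \<partial>M) = enn2real (\<integral>\<^sup>+x. ennreal (indicator X x * g x) \<partial>M)"
      using gM XM g_bd X(2) by (intro integral_eq_nn_integral) (auto simp: indicator_def)
    finally show "cond_exp_set M f X = enn2real (\<integral>\<^sup>+x. ennreal (indicator X x * g x) \<partial>M) / measure M X + f z"
      unfolding cond_exp_set_def using X(3) by (simp add: field_simps)
  qed
  define EA where "EA = (\<integral>\<^sup>+x. ennreal (indicator A x * g x) \<partial>M)"
  define EB where "EB = (\<integral>\<^sup>+x. ennreal (indicator B x * g x) \<partial>M)"
  have mA: "measure M A > 0" and mB: "measure M B > 0" using assms(7,8) unfolding M_def by auto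
  have nA: "EA = (\<integral>\<^sup>+x. ennreal (p x) * ennreal (indicator A x * g x) \<partial>L)"
    unfolding EA_def M_eq by (rule nn_integral_density) measurable
  have nB: "EB = (\<integral>\<^sup>+x. ennreal (p x) * ennreal (indicator B x * g x) \<partial>L)"
    unfolding EB_def M_eq by (rule nn_integral_density) measurable
  have eA: "emeasure M A = (\<integral>\<^sup>+x. ennreal (p x) * indicator A x \<partial>L)"
    unfolding M_eq by (rule emeasure_density) measurable
  have eB: "emeasure M B = (\<integral>\<^sup>+x. ennreal (p x) * indicator B x \<partial>L)"
    unfolding M_eq by (rule emeasure_density) measurable
  have LP: "L = PiM {1..<N} (\<lambda>_. lborel)" unfolding L_def leb_N_def ..
  have four: "EB * emeasure M A \<le> EA * emeasure M B"
    unfolding nA nB eA eB LP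
  proof (rule four_fun)
    show "finite {1..<N}" by simp
    show "(\<lambda>x. ennreal (p x) * ennreal (indicator B x * g x)) \<in> borel_measurable (PiM {1..<N} (\<lambda>_. lborel))"
      unfolding LP[symmetric] by measurable
    show "(\<lambda>x. ennreal (p x) * indicator A x) \<in> borel_measurable (PiM {1..<N} (\<lambda>_. lborel))"
      unfolding LP[symmetric] by measurable
    show "(\<lambda>x. ennreal (p x) * ennreal (indicator A x * g x)) \<in> borel_measurable (PiM {1..<N} (\<lambda>_. lborel))"
      unfolding LP[symmetric] by measurable
    show "(\<lambda>x. ennreal (p x) * indicator B x) \<in> borel_measurable (PiM {1..<N} (\<lambda>_. lborel))"
      unfolding LP[symmetric] by measurable
  next
    fix x y :: "nat \<Rightarrow> real"
    show "ennreal (p x) * ennreal (indicator B x * g x) * (ennreal (p y) * indicator A y)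
      \<le> ennreal (p (sup x y)) * ennreal (indicator A (sup x y) * g (sup x y)) *
         (ennreal (p (inf x y)) * indicator B (inf x y))"
    proof (cases "x \<in> B \<and> y \<in> A")
      case False then show ?thesis by auto
    next
      case True
      then have xO: "x \<in> Omega N" and yO: "y \<in> Omega N" using AO BO by auto
      have sO: "sup x y \<in> Omega N" and iO: "inf x y \<in> Omega N"
        using Omega_sup[OF xO yO] Omega_inf[OF xO yO] .
      have "indicator A y \<le> (indicator A (sup x y) :: real)"
        using assms(5) yO sO unfolding increasing_set_def increasing_fun_def coord_le_def
        by (auto simp: sup_max)
      then have sA: "sup x y \<in> A" using True by (cases "sup x y \<in> A") auto
      have "meet y x \<in> B" using assms(9) True by auto
      moreover have "meet y x = inf x y" by (auto simp: meet_def fun_eq_iff inf_min)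
      ultimately have iB: "inf x y \<in> B" by simp
      have "f x \<le> f (sup x y)"
        using finc xO sO unfolding increasing_fun_def coord_le_def by (auto simp: sup_max)
      then have gle: "g x \<le> g (sup x y)" unfolding g_def by simp
      have pp: "p x * p y \<le> p (sup x y) * p (inf x y)"
        unfolding p_def using assms(1,2) xO yO by (intro p_mtp2) auto
      have "p x * g x * p y = g x * (p x * p y)" by (simp add: ac_simps)
      also have "\<dots> \<le> g (sup x y) * (p (sup x y) * p (inf x y))"
        by (rule mult_mono) (use gle pp g_bd[OF xO] g_bd[OF sO] pnn in auto)
      also have "\<dots> = p (sup x y) * g (sup x y) * p (inf x y)" by (simp add: ac_simps)
      finally have r: "p x * g x * p y \<le> p (sup x y) * g (sup x y) * p (inf x y)" .
      have l1: "ennreal (p x * g x * p y) = ennreal (p x) * ennreal (g x) * ennreal (p y)"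
        using pnn g_bd[OF xO] by (simp add: ennreal_mult)
      have l2: "ennreal (p (sup x y) * g (sup x y) * p (inf x y)) = ennreal (p (sup x y)) * ennreal (g (sup x y)) * ennreal (p (inf x y))"
        using pnn g_bd[OF sO] by (simp add: ennreal_mult)
      have "ennreal (p x) * ennreal (g x) * ennreal (p y) \<le> ennreal (p (sup x y)) * ennreal (g (sup x y)) * ennreal (p (inf x y))"
        using ennreal_leI[OF r] unfolding l1 l2 .
      then show ?thesis using True sA iB by (simp add: ac_simps)
    qed
  qed
  have fA: "emeasure M A = ennreal (measure M A)" and fB: "emeasure M B = ennreal (measure M B)"
    and EAf: "EA < top" and EBf: "EB < top"
    using fin[OF AL AO mA] fin[OF BL BO mB] finE[OF AL AO mA] finE[OF BL BO mB]
    unfolding EA_def EB_def by auto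
  have "enn2real (EB * emeasure M A) \<le> enn2real (EA * emeasure M B)"
    using four EAf fB by (intro enn2real_mono) (auto simp: ennreal_mult_less_top)
  then have ineq: "enn2real EB * measure M A \<le> enn2real EA * measure M B"
    by (simp add: enn2real_mult measure_def)
  have "enn2real EB / measure M B \<le> enn2real EA / measure M A"
    using ineq mA mB by (simp add: divide_simps mult.commute)
  then show "cond_exp_set (pi_measure N \<alpha>) f B \<le> cond_exp_set (pi_measure N \<alpha>) f A"
    using key[OF AL AO mA] key[OF BL BO mB] unfolding M_def EA_def EB_def by simp
qed

end
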